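(* Let $\lambda,\mu,\nu\in P^+$ and suppose $(\lambda,\mu,\nu)$ is a low triple in $P^+$. Then there are integers $a,b\ge1$ such that $\{\lambda,\mu\}=\{au,bv\}$. If $\lambda=au$, $\mu=bv$ with $a\ge b$, then $\nu=\nu'+(a-b)u$ for some $\nu'\in\Lambda^+$ with $\nu'\le b\,\omega_\ell$. Moreover, if $\{\lambda,\mu\}=\{u,v\}$ then $\nu=0$.
   Context: Let $\Phi$ be of type $\mathsf{BC}_\ell$ realized in a Euclidean space $E$: the union of root systems of type $\mathsf B_\ell$ and $\mathsf C_\ell$, with basis $\alpha_1,\dots,\alpha_\ell$ the basis of $\mathsf B_\ell$ (Bourbaki numbering), $2\alpha_\ell\in\Phi$, and fundamental weights $\omega_1,\dots,\omega_\ell$ dual to $\alpha_1^\vee,\dots,\alpha_{\ell-1}^\vee,(2\alpha_\ell)^\vee$. Embed $E=E\times 0\subset E\times\mathbb R$ and take two linearly independent vectors $u,v\in (E\times\mathbb R)\setminus(E\times 0)$ with $u+v=\omega_\ell$. Let $\Lambda^+=\sum_{i=1}^\ell\mathbb N\omega_i$, $P^+=\sum_{i=1}^{\ell-1}\mathbb N\omega_i+\mathbb Nu+\mathbb Nv$, and $P$ the lattice generated by $P^+$. Order $P$ by $\mu\le\lambda$ iff $\lambda-\mu\in R^+$, where $R^+$ is the $\mathbb N$-span of $\alpha_1,\dots,\alpha_\ell$. A triple $(\lambda,\mu,\nu)$ in $P^+$ is a low triple if (i) whenever $\lambda',\mu'\in P^+$ with $\lambda'\le\lambda$, $\mu'\le\mu$,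 $\nu\le\lambda'+\mu'$, then $\lambda'=\lambda$ and $\mu'=\mu$; and (ii) $\nu+\sum_{i=1}^\ell\alpha_i\le\lambda+\mu$. *)

theory Defs
  imports Complex_Main
begin

text \<open>Vectors of E x R are functions nat => real:
  coordinates 0..ell-1 are the coordinates of E = R^ell (standard orthonormal
  basis e_1..e_ell is ev 0 .. ev (ell-1)), coordinate ell is the extra R-factor,
  and all coordinates beyond ell are zero.\<close>

type_synonym vec = "nat \<Rightarrow> real"

definition ev :: "nat \<Rightarrow> vec" where
  "ev i = (\<lambda>j. if j = i then 1 else 0)"

definition vzero :: vec where "vzero = (\<lambda>_. 0)"
definition vadd :: "vec \<Rightarrow> vec \<Rightarrow> vec" where "vadd x y = (\<lambda>j. x j + y j)"
definition vsub :: "vec \<Rightarrow> vec \<Rightarrow> vec" where "vsub x y = (\<lambda>j. x j - y j)"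
definition sc :: "real \<Rightarrow> vec \<Rightarrow> vec" where "sc c x = (\<lambda>j. c * x j)"

definition in_ExR :: "nat \<Rightarrow> vec \<Rightarrow> bool" where
  "in_ExR ell x \<longleftrightarrow> (\<forall>j>ell. x j = 0)"
definition in_E :: "nat \<Rightarrow> vec \<Rightarrow> bool" where
  "in_E ell x \<longleftrightarrow> (\<forall>j\<ge>ell. x j = 0)"

definition inner_v :: "nat \<Rightarrow> vec \<Rightarrow> vec \<Rightarrow> real" where
  "inner_v ell x y = (\<Sum>j\<le>ell. x j * y j)"

text \<open>Simple roots alpha_1..alpha_ell of B_ell (Bourbaki numbering):
  alpha_i = e_i - e_(i+1) for i < ell, alpha_ell = e_ell.  The root system
  BC_ell is the union of B_ell and C_ell, containing 2 alpha_ell.\<close>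
definition simple_root :: "nat \<Rightarrow> nat \<Rightarrow> vec" where
  "simple_root ell i = (if i < ell then vsub (ev (i - 1)) (ev i) else ev (ell - 1))"

definition coroot_of :: "nat \<Rightarrow> vec \<Rightarrow> vec" where
  "coroot_of ell \<beta> = sc (2 / inner_v ell \<beta> \<beta>) \<beta>"

definition bc_coroot :: "nat \<Rightarrow> nat \<Rightarrow> vec" where
  "bc_coroot ell i = (if i < ell then coroot_of ell (simple_root ell i)
                      else coroot_of ell (sc 2 (simple_root ell ell)))"

text \<open>Fundamental weights omega_i = e_1 + ... + e_i (1 \<le> i \<le> ell); these are the
  vectors of E dual to the coroots above, see lemma fund_weight_dual below.\<close>
definition fund_weight :: "nat \<Rightarrow> nat \<Rightarrow> vec" where
  "fund_weight ell i = (\<lambda>j. if j < i \<and> j < ell then 1 else 0)"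

definition Rplus :: "nat \<Rightarrow> vec set" where
  "Rplus ell = {x. \<exists>c::nat \<Rightarrow> nat.
      x = (\<lambda>j. \<Sum>i\<in>{1..ell}. real (c i) * simple_root ell i j)}"

definition Lplus :: "nat \<Rightarrow> vec set" where
  "Lplus ell = {x. \<exists>n::nat \<Rightarrow> nat.
      x = (\<lambda>j. \<Sum>i\<in>{1..ell}. real (n i) * fund_weight ell i j)}"

definition Pplus :: "nat \<Rightarrow> vec \<Rightarrow> vec \<Rightarrow> vec set" where
  "Pplus ell u v = {x. \<exists>(n::nat \<Rightarrow> nat) (m::nat) (k::nat).
      x = (\<lambda>j. (\<Sum>i\<in>{1..<ell}. real (n i) * fund_weight ell i j)
                 + real m * u j + real k * v j)}"

definition wle :: "nat \<Rightarrow> vec \<Rightarrow> vec \<Rightarrow> bool" where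
  "wle ell mu lam \<longleftrightarrow> vsub lam mu \<in> Rplus ell"

definition sum_simple_roots :: "nat \<Rightarrow> vec" where
  "sum_simple_roots ell = (\<lambda>j. \<Sum>i\<in>{1..ell}. simple_root ell i j)"

definition low_triple :: "nat \<Rightarrow> vec \<Rightarrow> vec \<Rightarrow> vec \<Rightarrow> vec \<Rightarrow> vec \<Rightarrow> bool" where
  "low_triple ell u v lam mu nu \<longleftrightarrow>
     lam \<in> Pplus ell u v \<and> mu \<in> Pplus ell u v \<and> nu \<in> Pplus ell u v \<and>
     (\<forall>lam'\<in>Pplus ell u v. \<forall>mu'\<in>Pplus ell u v.
        wle ell lam' lam \<and> wle ell mu' mu \<and> wle ell nu (vadd lam' mu') \<longrightarrow> lam' = lam \<and> mu' = mu) \<and>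
     wle ell (vadd nu (sum_simple_roots ell)) (vadd lam mu)"

lemma inner_v_ev: "j \<le> ell \<Longrightarrow> inner_v ell x (ev j) = x j"
  unfolding inner_v_def ev_def
  by (simp add: if_distrib[where f="\<lambda>t. _ * t"] sum.delta cong: if_cong)

lemma inner_v_sc: "inner_v ell x (sc c y) = c * inner_v ell x y"
  unfolding inner_v_def sc_def by (simp add: sum_distrib_left algebra_simps)

lemma inner_v_sc_left: "inner_v ell (sc c x) y = c * inner_v ell x y"
  unfolding inner_v_def sc_def by (simp add: sum_distrib_left algebra_simps)

lemma inner_v_sub: "inner_v ell x (vsub y z) = inner_v ell x y - inner_v ell x z"
  unfolding inner_v_def vsub_def by (simp add: sum_subtractf algebra_simps)

lemma fund_weight_dual:
  assumes "1 \<le> i" "i \<le> ell" "1 \<le> k" "k \<le> ell"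
  shows "inner_v ell (fund_weight ell i) (bc_coroot ell k) = (if i = k then 1 else 0)"
proof (cases "k < ell")
  case True
  have n: "inner_v ell (simple_root ell k) (simple_root ell k) = 2"
    using True assms
    by (simp add: simple_root_def inner_v_sub inner_v_ev, simp add: inner_v_def vsub_def ev_def)
  have m: "inner_v ell (fund_weight ell i) (simple_root ell k) = (if i = k then 1 else 0)"
    using True assms by (simp add: simple_root_def inner_v_sub inner_v_ev, auto simp add: fund_weight_def)
  show ?thesis using True
    by (simp add: bc_coroot_def coroot_of_def n inner_v_sc m)
next
  case False
  then have k: "k = ell" using assms by simp
  have n: "inner_v ell (sc 2 (simple_root ell ell)) (sc 2 (simple_root ell ell)) = 4"
    using assms
    using assms by (simp add: simple_root_def inner_v_sc inner_v_sc_left inner_v_ev, simp add: ev_def)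
  have m: "inner_v ell (fund_weight ell i) (sc 2 (simple_root ell ell)) = (if i = ell then 2 else 0)"
    using assms by (simp add: simple_root_def inner_v_sc inner_v_ev, auto simp add: fund_weight_def)
  have c: "bc_coroot ell k = sc (1/2) (sc 2 (simple_root ell ell))"
    using k by (simp add: bc_coroot_def coroot_of_def n)
  show ?thesis unfolding c inner_v_sc[of ell _ "1/2"] m using k by simp
qed

end

theory Submission
  imports Defs
begin

definition Pv :: "nat \<Rightarrow> vec \<Rightarrow> vec \<Rightarrow> (nat \<Rightarrow> nat) \<Rightarrow> nat \<Rightarrow> nat \<Rightarrow> vec" where
  "Pv ell u v n m k = (\<lambda>j. (\<Sum>i\<in>{1..<ell}. real (n i) * fund_weight ell i j) + real m * u j + real k * v j)"

lemma Pplus_Pv: "x \<in> Pplus ell u v \<longleftrightarrow> (\<exists>n m k. x = Pv ell u v n m k)"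
  unfolding Pplus_def Pv_def by auto

lemma Pv_in: "Pv ell u v n m k \<in> Pplus ell u v"
  using Pplus_Pv by blast

lemma fw_diff: "1 \<le> i \<Longrightarrow> i \<le> ell \<Longrightarrow> fund_weight ell i p - fund_weight ell (i-1) p = ev (i-1) p"
  by (auto simp: fund_weight_def ev_def)

lemma fw0: "fund_weight ell 0 p = 0"
  by (simp add: fund_weight_def)

lemma R_add: "x \<in> Rplus ell \<Longrightarrow> y \<in> Rplus ell \<Longrightarrow> vadd x y \<in> Rplus ell"
proof -
  assume "x \<in> Rplus ell" "y \<in> Rplus ell"
  then obtain c c' where c: "x = (\<lambda>j. \<Sum>i\<in>{1..ell}. real (c i) * simple_root ell i j)"
    and c': "y = (\<lambda>j. \<Sum>i\<in>{1..ell}. real (c' i) * simple_root ell i j)"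
    unfolding Rplus_def by auto
  show ?thesis unfolding Rplus_def
    by (rule CollectI, rule exI[of _ "\<lambda>i. c i + c' i"])
       (simp add: c c' vadd_def sum.distrib algebra_simps)
qed

lemma R_zero: "vzero \<in> Rplus ell"
  unfolding Rplus_def vzero_def by (rule CollectI, rule exI[of _ "\<lambda>i. 0"]) simp

lemma R_sr: "1 \<le> i \<Longrightarrow> i \<le> ell \<Longrightarrow> simple_root ell i \<in> Rplus ell"
  unfolding Rplus_def
  apply (rule CollectI, rule exI[of _ "\<lambda>i'. if i' = i then 1 else 0"])
  apply (rule ext)
  apply (subgoal_tac "\<And>j. (\<Sum>ia\<in>{1..ell}. real (if ia = i then 1 else 0) * simple_root ell ia j) = (\<Sum>ia\<in>{1..ell}. (if ia = i then simple_root ell ia j else 0))")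
   apply (simp add: sum.delta)
  apply (rule sum.cong, auto)
  done

lemma R_ev_aux: "d < ell \<Longrightarrow> ev (ell - 1 - d) \<in> Rplus ell"
proof (induction d)
  case 0
  have "ev (ell - 1) = simple_root ell ell" by (simp add: simple_root_def)
  then show ?case using R_sr[of ell ell] 0 by simp
next
  case (Suc d)
  let ?j = "ell - 1 - d"
  have j: "1 \<le> ?j" "?j < ell" using Suc.prems by auto
  have "ev (?j - 1) = vadd (simple_root ell ?j) (ev ?j)"
    using j by (auto simp: simple_root_def vadd_def vsub_def)
  moreover have "ev ?j \<in> Rplus ell" using Suc by simp
  moreover have "simple_root ell ?j \<in> Rplus ell" using R_sr j by simp
  moreover have "ell - 1 - Suc d = ?j - 1" by simp
  ultimately show ?case using R_add by metis
qed

lemma R_ev: "1 \<le> j \<Longrightarrow> j \<le> ell \<Longrightarrow> ev (j - 1) \<in> Rplus ell"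
  using R_ev_aux[of "ell - j" ell] by simp

lemma R_ev0_aux: "j < ell \<Longrightarrow> vsub (ev 0) (ev j) \<in> Rplus ell"
proof (induction j)
  case 0
  have "vsub (ev 0) (ev 0) = vzero" by (simp add: vsub_def vzero_def)
  then show ?case using R_zero by simp
next
  case (Suc j)
  have "vsub (ev 0) (ev (Suc j)) = vadd (vsub (ev 0) (ev j)) (simple_root ell (Suc j))"
    using Suc.prems by (auto simp: simple_root_def vadd_def vsub_def)
  then show ?case using Suc R_add R_sr[of "Suc j" ell] by simp
qed

lemma R_ev0: "1 \<le> j \<Longrightarrow> j \<le> ell \<Longrightarrow> vsub (ev 0) (ev (j - 1)) \<in> Rplus ell"
  using R_ev0_aux[of "j - 1" ell] by simp

lemma R_coord: assumes "x \<in> Rplus ell" "1 \<le> ell" shows "x 0 \<ge> 0" "x ell = 0"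
proof -
  obtain c where c: "x = (\<lambda>j. \<Sum>i\<in>{1..ell}. real (c i) * simple_root ell i j)"
    using assms unfolding Rplus_def by auto
  have "\<And>i. i \<in> {1..ell} \<Longrightarrow> simple_root ell i 0 \<ge> 0"
    by (auto simp: simple_root_def vsub_def ev_def)
  then show "x 0 \<ge> 0" unfolding c by (auto intro!: sum_nonneg)
  have "\<And>i. i \<in> {1..ell} \<Longrightarrow> simple_root ell i ell = 0"
    using assms(2) by (auto simp: simple_root_def vsub_def ev_def)
  then show "x ell = 0" unfolding c by simp
qed

lemma ssr_aux: "d < ell \<Longrightarrow> (\<Sum>i\<in>{ell - d..ell}. simple_root ell i p) = ev (ell - d - 1) p"
proof (induction d)
  case 0
  then show ?case by (simp add: simple_root_def)
next
  case (Suc d)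
  let ?j = "ell - Suc d"
  have j: "1 \<le> ?j" "?j < ell" using Suc.prems by auto
  have "(\<Sum>i\<in>{?j..ell}. simple_root ell i p) = simple_root ell ?j p + (\<Sum>i\<in>{Suc ?j..ell}. simple_root ell i p)"
    using j by (simp add: sum.atLeast_Suc_atMost)
  also have "Suc ?j = ell - d" using Suc.prems by simp
  also have "(\<Sum>i\<in>{ell - d..ell}. simple_root ell i p) = ev (ell - d - 1) p" using Suc by simp
  finally show ?case using j Suc.prems
    by (auto simp: simple_root_def vsub_def ev_def)
qed

lemma ssr: "1 \<le> ell \<Longrightarrow> sum_simple_roots ell = ev 0"
  using ssr_aux[of "ell - 1" ell] by (auto simp: sum_simple_roots_def)

lemma uv_coord: "vadd u v = fund_weight ell ell \<Longrightarrow> v p = fund_weight ell ell p - u p"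
  by (drule fun_cong[of _ _ p]) (simp add: vadd_def)

lemma Pv_ell: "vadd u v = fund_weight ell ell \<Longrightarrow> Pv ell u v n m k ell = (real m - real k) * u ell"
  using uv_coord[of u v ell ell]
  by (simp add: Pv_def fund_weight_def algebra_simps)

lemma Pv_0: "1 \<le> ell \<Longrightarrow> vadd u v = fund_weight ell ell \<Longrightarrow>
   Pv ell u v n m k 0 = (\<Sum>i\<in>{1..<ell}. real (n i)) + (real m - real k) * u 0 + real k"
proof -
  assume a: "1 \<le> ell" "vadd u v = fund_weight ell ell"
  have v0: "v 0 = 1 - u 0" using uv_coord[OF a(2), of 0] a(1) by (simp add: fund_weight_def)
  show ?thesis using a(1) by (simp add: Pv_def fund_weight_def v0 algebra_simps)
qed

lemma W_shift:
  assumes "1 \<le> i" "i < ell" "n i > 0"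
  defines "n' \<equiv> (\<lambda>i'. if i' = i then n i - 1 else if i' = i - 1 then n i' + 1 else n i')"
  shows "(\<Sum>i'\<in>{1..<ell}. real (n' i') * fund_weight ell i' p)
       = (\<Sum>i'\<in>{1..<ell}. real (n i') * fund_weight ell i' p) - fund_weight ell i p + fund_weight ell (i-1) p"
proof -
  let ?f = "\<lambda>i'. fund_weight ell i' p"
  have e: "real (n' i') * ?f i' = real (n i') * ?f i' - (if i' = i then ?f i' else 0) + (if i' = i - 1 then ?f i' else 0)" for i'
    using assms(1,3) by (auto simp: n'_def of_nat_diff algebra_simps)
  have "(\<Sum>i'\<in>{1..<ell}. real (n' i') * ?f i') = (\<Sum>i'\<in>{1..<ell}. real (n i') * ?f i') - (\<Sum>i'\<in>{1..<ell}. (if i' = i then ?f i' else 0)) + (\<Sum>i'\<in>{1..<ell}. (if i' = i - 1 then ?f i' else 0))"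
    unfolding e by (simp add: sum.distrib sum_subtractf)
  also have "(\<Sum>i'\<in>{1..<ell}. (if i' = i then ?f i' else 0)) = ?f i" using assms by (simp add: sum.delta)
  also have "(\<Sum>i'\<in>{1..<ell}. (if i' = i - 1 then ?f i' else 0)) = ?f (i - 1)"
    using assms by (cases "i = 1") (auto simp: sum.delta fw0)
  finally show ?thesis .
qed

lemma remove_n:
  assumes "1 \<le> i" "i < ell" "n i > 0"
  shows "\<exists>n'. Pv ell u v n' m k = vsub (Pv ell u v n m k) (ev (i - 1))"
proof -
  define n' where "n' \<equiv> (\<lambda>i'. if i' = i then n i - 1 else if i' = i - 1 then n i' + 1 else n i')"
  show ?thesis
    apply (rule exI[of _ n'])
    apply (rule ext)
    using W_shift[of i ell n, OF assms] fw_diff[of i ell] assms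
    unfolding n'_def Pv_def vsub_def
    by (simp add: algebra_simps)
qed

lemma remove_mk:
  assumes "1 \<le> ell" "m > 0" "k > 0" "vadd u v = fund_weight ell ell"
  shows "\<exists>n'. Pv ell u v n' (m - 1) (k - 1) = vsub (Pv ell u v n m k) (ev (ell - 1))"
proof -
  define n' where "n' \<equiv> (\<lambda>i'. if i' = ell - 1 then n i' + 1 else n i')"
  have s: "(\<Sum>i'\<in>{1..<ell}. real (n' i') * fund_weight ell i' p)
       = (\<Sum>i'\<in>{1..<ell}. real (n i') * fund_weight ell i' p) + fund_weight ell (ell-1) p" for p
  proof -
    let ?f = "\<lambda>i'. fund_weight ell i' p"
    have e: "real (n' i') * ?f i' = real (n i') * ?f i' + (if i' = ell - 1 then ?f i' else 0)" for i'
      by (auto simp: n'_def algebra_simps)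
    have "(\<Sum>i'\<in>{1..<ell}. real (n' i') * ?f i') = (\<Sum>i'\<in>{1..<ell}. real (n i') * ?f i') + (\<Sum>i'\<in>{1..<ell}. (if i' = ell - 1 then ?f i' else 0))"
      unfolding e by (simp add: sum.distrib)
    also have "(\<Sum>i'\<in>{1..<ell}. (if i' = ell - 1 then ?f i' else 0)) = ?f (ell - 1)"
      using assms by (cases "ell = 1") (auto simp: sum.delta fw0)
    finally show ?thesis .
  qed
  show ?thesis
    apply (rule exI[of _ n'])
    apply (rule ext)
    subgoal for p
    using s[of p] fw_diff[of ell ell p] assms uv_coord[OF assms(4), of p]
    unfolding Pv_def vsub_def
    by (simp add: of_nat_diff algebra_simps)
    done
qed

lemma shrink_lam:
  assumes LT: "\<forall>lam'\<in>Pplus ell u v. \<forall>mu'\<in>Pplus ell u v.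
        wle ell lam' lam \<and> wle ell mu' mu \<and> wle ell nu (vadd lam' mu') \<longrightarrow> lam' = lam \<and> mu' = mu"
    and mu: "mu \<in> Pplus ell u v"
    and X: "vsub (vsub (vadd lam mu) nu) (ev 0) \<in> Rplus ell"
    and l: "lam' \<in> Pplus ell u v" "lam' = vsub lam (ev (j - 1))" "1 \<le> j" "j \<le> ell"
  shows False
proof -
  have "wle ell lam' lam"
  proof -
    have "vsub lam lam' = ev (j - 1)" using l by (auto simp: vsub_def)
    then show ?thesis using R_ev[OF l(3,4)] by (simp add: wle_def)
  qed
  moreover have "wle ell mu mu"
    using R_zero by (simp add: wle_def vsub_def vzero_def)
  moreover have "wle ell nu (vadd lam' mu)"
  proof -
    have "vsub (vadd lam' mu) nu = vadd (vsub (vsub (vadd lam mu) nu) (ev 0)) (vsub (ev 0) (ev (j - 1)))"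
      using l by (auto simp: vsub_def vadd_def)
    then show ?thesis using R_add[OF X R_ev0[OF l(3,4)]] by (simp add: wle_def)
  qed
  ultimately have "lam' = lam" using LT l(1) mu by blast
  then have "lam' (j - 1) = lam (j - 1)" by simp
  then show False using l(2) by (simp add: vsub_def ev_def)
qed

lemma shrink_mu:
  assumes LT: "\<forall>lam'\<in>Pplus ell u v. \<forall>mu'\<in>Pplus ell u v.
        wle ell lam' lam \<and> wle ell mu' mu \<and> wle ell nu (vadd lam' mu') \<longrightarrow> lam' = lam \<and> mu' = mu"
    and lam: "lam \<in> Pplus ell u v"
    and X: "vsub (vsub (vadd lam mu) nu) (ev 0) \<in> Rplus ell"
    and l: "mu' \<in> Pplus ell u v" "mu' = vsub mu (ev (j - 1))" "1 \<le> j" "j \<le> ell"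
  shows False
proof -
  have "wle ell mu' mu"
  proof -
    have "vsub mu mu' = ev (j - 1)" using l by (auto simp: vsub_def)
    then show ?thesis using R_ev[OF l(3,4)] by (simp add: wle_def)
  qed
  moreover have "wle ell lam lam"
    using R_zero by (simp add: wle_def vsub_def vzero_def)
  moreover have "wle ell nu (vadd lam mu')"
  proof -
    have "vsub (vadd lam mu') nu = vadd (vsub (vsub (vadd lam mu) nu) (ev 0)) (vsub (ev 0) (ev (j - 1)))"
      using l by (auto simp: vsub_def vadd_def)
    then show ?thesis using R_add[OF X R_ev0[OF l(3,4)]] by (simp add: wle_def)
  qed
  ultimately have "mu' = mu" using LT l(1) lam by blast
  then have "mu' (j - 1) = mu (j - 1)" by simp
  then show False using l(2) by (simp add: vsub_def ev_def)
qed

lemma no_shrink: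
  assumes "1 \<le> ell" "vadd u v = fund_weight ell ell"
    and H: "\<And>x j. x \<in> Pplus ell u v \<Longrightarrow> x = vsub (Pv ell u v n m k) (ev (j - 1)) \<Longrightarrow> 1 \<le> j \<Longrightarrow> j \<le> ell \<Longrightarrow> False"
  shows "(\<forall>i\<in>{1..<ell}. n i = 0) \<and> (m = 0 \<or> k = 0)"
proof (intro conjI ballI)
  fix i assume i: "i \<in> {1..<ell}"
  show "n i = 0"
  proof (rule ccontr)
    assume "n i \<noteq> 0"
    then obtain n' where "Pv ell u v n' m k = vsub (Pv ell u v n m k) (ev (i - 1))"
      using remove_n[of i ell n u v m k] i by auto
    then show False using i by (intro H[OF Pv_in, of n' m k i]) auto
  qed
next
  show "m = 0 \<or> k = 0"
  proof (rule ccontr)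
    assume "\<not> (m = 0 \<or> k = 0)"
    then obtain n' where "Pv ell u v n' (m - 1) (k - 1) = vsub (Pv ell u v n m k) (ev (ell - 1))"
      using remove_mk[of ell m k u v n] assms by auto
    then show False using assms by (intro H[OF Pv_in, of n' "m - 1" "k - 1" ell]) auto
  qed
qed

lemma Pv_simp: "\<forall>i\<in>{1..<ell}. n i = 0 \<Longrightarrow> Pv ell u v n m k = (\<lambda>j. real m * u j + real k * v j)"
  by (simp add: Pv_def)


theorem mainTheorem6:
  fixes ell :: nat and u v lam mu nu :: vec
  assumes "1 \<le> ell"
    and "in_ExR ell u" and "in_ExR ell v"
    and "\<not> in_E ell u" and "\<not> in_E ell v"
    and "\<forall>a b :: real. vadd (sc a u) (sc b v) = vzero \<longrightarrow> a = 0 \<and> b = 0"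
    and "vadd u v = fund_weight ell ell"
    and "lam \<in> Pplus ell u v" and "mu \<in> Pplus ell u v" and "nu \<in> Pplus ell u v"
    and "low_triple ell u v lam mu nu"
  shows "(\<exists>a b :: nat. 1 \<le> a \<and> 1 \<le> b \<and> {lam, mu} = {sc (real a) u, sc (real b) v})
     \<and> (\<forall>a b :: nat. lam = sc (real a) u \<and> mu = sc (real b) v \<and> b \<le> a \<longrightarrow>
          (\<exists>nu'\<in>Lplus ell. nu = vadd nu' (sc (real (a - b)) u)
                          \<and> wle ell nu' (sc (real b) (fund_weight ell ell))))
     \<and> ({lam, mu} = {u, v} \<longrightarrow> nu = vzero)"
proof -
  note ell = assms(1) and uv = assms(7)
  have uell: "u ell \<noteq> 0"
  proof
    assume "u ell = 0"
    then have "in_E ell u" using assms(2) unfolding in_ExR_def in_E_def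
      by (metis le_neq_implies_less)
    then show False using assms(4) by simp
  qed
  have vell: "v ell = - u ell" using uv_coord[OF uv, of ell] by (simp add: fund_weight_def)
  have v0: "v 0 = 1 - u 0" using uv_coord[OF uv, of 0] ell by (simp add: fund_weight_def)
  obtain n1 m1 k1 where lam: "lam = Pv ell u v n1 m1 k1" using assms(8) Pplus_Pv by blast
  obtain n2 m2 k2 where mu: "mu = Pv ell u v n2 m2 k2" using assms(9) Pplus_Pv by blast
  obtain n3 m3 k3 where nu: "nu = Pv ell u v n3 m3 k3" using assms(10) Pplus_Pv by blast
  have LT: "\<forall>lam'\<in>Pplus ell u v. \<forall>mu'\<in>Pplus ell u v.
        wle ell lam' lam \<and> wle ell mu' mu \<and> wle ell nu (vadd lam' mu') \<longrightarrow> lam' = lam \<and> mu' = mu"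
    and W: "wle ell (vadd nu (sum_simple_roots ell)) (vadd lam mu)"
    using assms(11) unfolding low_triple_def by auto
  define D where "D = vsub (vadd lam mu) nu"
  have X: "vsub D (ev 0) \<in> Rplus ell"
  proof -
    have "vsub D (ev 0) = vsub (vadd lam mu) (vadd nu (sum_simple_roots ell))"
      by (auto simp: D_def ssr[OF ell] vsub_def vadd_def)
    then show ?thesis using W by (simp add: wle_def)
  qed
  have Dell: "D ell = 0" using R_coord(2)[OF X ell] ell by (simp add: vsub_def ev_def)
  have D0: "D 0 \<ge> 1" using R_coord(1)[OF X ell] by (simp add: vsub_def ev_def)
  have DR: "D \<in> Rplus ell"
  proof -
    have "D = vadd (vsub D (ev 0)) (ev (1 - 1))" by (auto simp: vsub_def vadd_def)
    then show ?thesis using R_add[OF X R_ev[of 1 ell]] ell by simp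
  qed
  have Dj: "D j = lam j + mu j - nu j" for j by (simp add: D_def vsub_def vadd_def)
  have nuell: "nu ell = (real m3 - real k3) * u ell" using Pv_ell[OF uv] nu by simp
  have nu0: "nu 0 = (\<Sum>i\<in>{1..<ell}. real (n3 i)) + (real m3 - real k3) * u 0 + real k3"
    using Pv_0[OF ell uv] nu by simp
  have sn3: "(\<Sum>i\<in>{1..<ell}. real (n3 i)) \<ge> 0" by (simp add: sum_nonneg)
  have P3: "{lam, mu} = {u, v} \<longrightarrow> nu = vzero"
  proof
    assume "{lam, mu} = {u, v}"
    then have lm: "\<And>j. lam j + mu j = u j + v j" by (auto simp: doubleton_eq_iff)
    have "(real m3 - real k3) * u ell = 0" using Dell Dj[of ell] lm[of ell] nuell vell by simp
    then have mk: "m3 = k3" using uell by simp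
    have "1 \<le> 1 - ((\<Sum>i\<in>{1..<ell}. real (n3 i)) + real k3)"
      using D0 Dj[of 0] lm[of 0] nu0 v0 mk by simp
    then have s0: "(\<Sum>i\<in>{1..<ell}. real (n3 i)) = 0" and k0: "k3 = 0" using sn3 by linarith+
    have "\<forall>i\<in>{1..<ell}. n3 i = 0" using s0 by (simp add: sum_nonneg_eq_0_iff)
    then show "nu = vzero" using nu Pv_simp k0 mk by (auto simp: vzero_def)
  qed
  have P2: "\<forall>a b :: nat. lam = sc (real a) u \<and> mu = sc (real b) v \<and> b \<le> a \<longrightarrow>
          (\<exists>nu'\<in>Lplus ell. nu = vadd nu' (sc (real (a - b)) u)
                          \<and> wle ell nu' (sc (real b) (fund_weight ell ell)))"
  proof (intro allI impI)
    fix a b :: nat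
    assume ab: "lam = sc (real a) u \<and> mu = sc (real b) v \<and> b \<le> a"
    have "(real a - real b - (real m3 - real k3)) * u ell = 0"
      using Dell Dj[of ell] ab nuell vell by (simp add: sc_def algebra_simps)
    then have e: "real a - real b = real m3 - real k3" using uell by simp
    define nu' where "nu' = (\<lambda>j. \<Sum>i\<in>{1..ell}. real ((n3(ell := k3)) i) * fund_weight ell i j)"
    have L: "nu' \<in> Lplus ell" unfolding Lplus_def nu'_def by blast
    have nu'j: "nu' j = (\<Sum>i\<in>{1..<ell}. real (n3 i) * fund_weight ell i j) + real k3 * (u j + v j)" for j
    proof -
      have "{1..ell} = insert ell {1..<ell}" using ell by auto
      then have "nu' j = real k3 * fund_weight ell ell j + (\<Sum>i\<in>{1..<ell}. real ((n3(ell := k3)) i) * fund_weight ell i j)"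
        unfolding nu'_def by simp
      also have "(\<Sum>i\<in>{1..<ell}. real ((n3(ell := k3)) i) * fund_weight ell i j) = (\<Sum>i\<in>{1..<ell}. real (n3 i) * fund_weight ell i j)"
        by (rule sum.cong) auto
      finally show ?thesis using uv_coord[OF uv, of j] by simp
    qed
    have ab': "real (a - b) = real a - real b" using ab by simp
    have N: "nu = vadd nu' (sc (real (a - b)) u)"
      by (rule ext) (simp add: nu Pv_def vadd_def sc_def nu'j ab' e algebra_simps)
    have "vsub (sc (real b) (fund_weight ell ell)) nu' = D"
    proof (rule ext)
      fix j
      show "vsub (sc (real b) (fund_weight ell ell)) nu' j = D j"
      proof -
        have fwj: "fund_weight ell ell j = u j + v j" using uv_coord[OF uv, of j] by simp
        have m3: "real m3 = real a - real b + real k3" using e by simp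
        show ?thesis using N ab
          by (simp add: Dj vsub_def sc_def vadd_def ab' fwj m3 algebra_simps)
      qed
    qed
    then have "wle ell nu' (sc (real b) (fund_weight ell ell))" using DR by (simp add: wle_def)
    then show "\<exists>nu'\<in>Lplus ell. nu = vadd nu' (sc (real (a - b)) u)
                          \<and> wle ell nu' (sc (real b) (fund_weight ell ell))" using L N by blast
  qed
  have S1: "(\<forall>i\<in>{1..<ell}. n1 i = 0) \<and> (m1 = 0 \<or> k1 = 0)"
    apply (rule no_shrink[OF ell uv])
    using shrink_lam[OF LT assms(9) X[unfolded D_def]] lam by blast
  have S2: "(\<forall>i\<in>{1..<ell}. n2 i = 0) \<and> (m2 = 0 \<or> k2 = 0)"
    apply (rule no_shrink[OF ell uv])
    using shrink_mu[OF LT assms(8) X[unfolded D_def]] mu by blast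
  have lam': "lam = (\<lambda>j. real m1 * u j + real k1 * v j)" using lam Pv_simp S1 by blast
  have mu': "mu = (\<lambda>j. real m2 * u j + real k2 * v j)" using mu Pv_simp S2 by blast
  have "(real m1 - real k1 + real m2 - real k2 - (real m3 - real k3)) * u ell = 0"
    using Dell Dj[of ell] lam' mu' nuell vell by (simp add: algebra_simps)
  then have e1: "real m1 - real k1 + real m2 - real k2 = real m3 - real k3" using uell by simp
  have "1 \<le> real k1 + real k2 - (\<Sum>i\<in>{1..<ell}. real (n3 i)) - real k3"
  proof -
    have "D 0 = (real m1 - real k1 + real m2 - real k2 - (real m3 - real k3)) * u 0 + real k1 + real k2 - (\<Sum>i\<in>{1..<ell}. real (n3 i)) - real k3"
      using Dj[of 0] lam' mu' nu0 v0 by (simp add: algebra_simps)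
    then show ?thesis using D0 e1 by simp
  qed
  then have e2: "real k3 + 1 \<le> real k1 + real k2" using sn3 by linarith
  have i1: "int m1 + int m2 + int k3 = int m3 + int k1 + int k2" using e1 by linarith
  have i2: "int k3 + 1 \<le> int k1 + int k2" using e2 by linarith
  have cases: "(k1 = 0 \<and> m2 = 0 \<and> 1 \<le> m1 \<and> 1 \<le> k2) \<or> (m1 = 0 \<and> k2 = 0 \<and> 1 \<le> k1 \<and> 1 \<le> m2)"
    using S1 S2 i1 i2 by auto
  have P1: "\<exists>a b :: nat. 1 \<le> a \<and> 1 \<le> b \<and> {lam, mu} = {sc (real a) u, sc (real b) v}"
    using cases
  proof
    assume c: "k1 = 0 \<and> m2 = 0 \<and> 1 \<le> m1 \<and> 1 \<le> k2"
    then have "lam = sc (real m1) u" "mu = sc (real k2) v" using lam' mu' by (auto simp: sc_def)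
    then show ?thesis using c by blast
  next
    assume c: "m1 = 0 \<and> k2 = 0 \<and> 1 \<le> k1 \<and> 1 \<le> m2"
    then have "lam = sc (real k1) v" "mu = sc (real m2) u" using lam' mu' by (auto simp: sc_def)
    then have "{lam, mu} = {sc (real m2) u, sc (real k1) v}" by auto
    then show ?thesis using c by blast
  qed
  show ?thesis using P1 P2 P3 by blast
qed

end
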